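(* Let $L$ be the generator (domain $D(L)$) of a conservative Markov process with stationary distribution $\nu$, and $\mathcal{E}(f,g)=-\int Lf\cdot g\,d\nu$. Let $f,g\in D(L)$ satisfy $\mathcal{E}(f,f)\mathcal{E}(g,g)>0$ and $\check{\mathcal{E}}(f,g):=(\mathcal{E}(f,g)-\mathcal{E}(g,f))/2>0$. Put $\tilde{\mathcal{E}}(f,g)=(\mathcal{E}(f,g)+\mathcal{E}(g,f))/2$ and $\Delta(f,g)=\mathcal{E}(f,f)\mathcal{E}(g,g)-\tilde{\mathcal{E}}(f,g)^2$. Then $\Delta(f,g)\ge0$ and $$\mathrm{Sect}(\mathcal{E})^2-1\ge\begin{cases}\check{\mathcal{E}}(f,g)^2/\Delta(f,g)&\text{if }\mathcal{E}(f,f)\mathcal{E}(g,g)\ne\mathcal{E}(f,g)\tilde{\mathcal{E}}(f,g)\text{ and }\Delta(f,g)>0,\\ \infty&\text{if }\mathcal{E}(f,f)\mathcal{E}(g,g)\ne\mathcal{E}(f,g)\tilde{\mathcal{E}}(f,g)\text{ and }\Delta(f,g)=0,\\ \check{\mathcal{E}}(f,g)/\tilde{\mathcal{E}}(f,g)&\text{if }\mathcal{E}(f,f)\mathcal{E}(g,g)=\mathcal{E}(f,g)\tilde{\mathcal{E}}(f,g).\end{cases}$$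
   Context: $\mathrm{Sect}(\mathcal{E})$ is the infimum of all finite $C$ such that $\mathcal{E}(f,g)\le C\mathcal{E}(f,f)^{1/2}\mathcal{E}(g,g)^{1/2}$ for all $f,g\in D(L)$, and $=\infty$ if no such $C$ exists. *)

theory Defs
  imports "HOL-Probability.Probability"
begin

text \<open>A conservative time-homogeneous Markov process on the measurable state space
  underlying \<open>\<nu>\<close> is given by its transition kernels \<open>K t\<close>, \<open>t \<ge> 0\<close>
  (probability kernels, i.e. conservative), satisfying the Chapman--Kolmogorov
  (semigroup) equations.\<close>

definition markov_semigroup :: "'a measure \<Rightarrow> (real \<Rightarrow> 'a \<Rightarrow> 'a measure) \<Rightarrow> bool" where
  "markov_semigroup M K \<longleftrightarrow>
     (\<forall>t\<ge>0. K t \<in> M \<rightarrow>\<^sub>M prob_algebra M) \<and>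
     (\<forall>x\<in>space M. K 0 x = return M x) \<and>
     (\<forall>s\<ge>0. \<forall>t\<ge>0. \<forall>x\<in>space M. K (s + t) x = bind (K s x) (K t))"

definition stationary_distribution :: "'a measure \<Rightarrow> (real \<Rightarrow> 'a \<Rightarrow> 'a measure) \<Rightarrow> bool" where
  "stationary_distribution \<nu> K \<longleftrightarrow> prob_space \<nu> \<and> (\<forall>t\<ge>0. bind \<nu> (K t) = \<nu>)"

definition sq_int :: "'a measure \<Rightarrow> ('a \<Rightarrow> real) \<Rightarrow> bool" where
  "sq_int \<nu> f \<longleftrightarrow> f \<in> borel_measurable \<nu> \<and> integrable \<nu> (\<lambda>x. (f x)\<^sup>2)"

definition trans_op :: "(real \<Rightarrow> 'a \<Rightarrow> 'a measure) \<Rightarrow> real \<Rightarrow> ('a \<Rightarrow> real) \<Rightarrow> 'a \<Rightarrow> real" where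
  "trans_op K t f x = (\<integral>y. f y \<partial>(K t x))"

definition has_generator_value ::
  "'a measure \<Rightarrow> (real \<Rightarrow> 'a \<Rightarrow> 'a measure) \<Rightarrow> ('a \<Rightarrow> real) \<Rightarrow> ('a \<Rightarrow> real) \<Rightarrow> bool" where
  "has_generator_value \<nu> K f g \<longleftrightarrow> sq_int \<nu> f \<and> sq_int \<nu> g \<and>
     ((\<lambda>t. \<integral>x. ((trans_op K t f x - f x) / t - g x)\<^sup>2 \<partial>\<nu>) \<longlongrightarrow> 0) (at_right 0)"

definition gen_domain :: "'a measure \<Rightarrow> (real \<Rightarrow> 'a \<Rightarrow> 'a measure) \<Rightarrow> ('a \<Rightarrow> real) set" where
  "gen_domain \<nu> K = {f. \<exists>g. has_generator_value \<nu> K f g}"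

definition generator :: "'a measure \<Rightarrow> (real \<Rightarrow> 'a \<Rightarrow> 'a measure) \<Rightarrow> ('a \<Rightarrow> real) \<Rightarrow> 'a \<Rightarrow> real" where
  "generator \<nu> K f = (SOME g. has_generator_value \<nu> K f g)"

definition dform :: "'a measure \<Rightarrow> (real \<Rightarrow> 'a \<Rightarrow> 'a measure) \<Rightarrow> ('a \<Rightarrow> real) \<Rightarrow> ('a \<Rightarrow> real) \<Rightarrow> real" where
  "dform \<nu> K f g = - (\<integral>x. generator \<nu> K f x * g x \<partial>\<nu>)"

text \<open>Sector constant: infimum of all finite \<open>C\<close> with
  \<open>\<E>(f,g) \<le> C \<E>(f,f)^{1/2} \<E>(g,g)^{1/2}\<close> on \<open>D(L)\<close>; \<open>\<infinity>\<close> if there is none.\<close>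

definition sect :: "'a measure \<Rightarrow> (real \<Rightarrow> 'a \<Rightarrow> 'a measure) \<Rightarrow> ereal" where
  "sect \<nu> K = Inf {ereal C | C. \<forall>f\<in>gen_domain \<nu> K. \<forall>g\<in>gen_domain \<nu> K.
       dform \<nu> K f g \<le> C * sqrt (dform \<nu> K f f) * sqrt (dform \<nu> K g g)}"

end

theory Submission
  imports Defs
begin

lemma markov_kernel:
  assumes "markov_semigroup M K" "t \<ge> 0" "x \<in> space M"
  shows "prob_space (K t x)" "sets (K t x) = sets M"
proof -
  have "K t \<in> M \<rightarrow>\<^sub>M prob_algebra M" using assms unfolding markov_semigroup_def by auto
  then have "K t x \<in> space (prob_algebra M)" using assms(3) by (rule measurable_space)
  then show "prob_space (K t x)" "sets (K t x) = sets M" by (auto simp: space_prob_algebra)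
qed

lemma markov_sub:
  assumes "markov_semigroup M K" "t \<ge> 0"
  shows "K t \<in> M \<rightarrow>\<^sub>M subprob_algebra M"
  using assms unfolding markov_semigroup_def by (auto intro: measurable_prob_algebraD)

lemma trans_op_meas:
  assumes "markov_semigroup M K" "t \<ge> 0" "f \<in> borel_measurable M"
  shows "trans_op K t f \<in> borel_measurable M"
proof -
  have "(\<lambda>N. integral\<^sup>L N f) \<in> subprob_algebra M \<rightarrow>\<^sub>M borel"
    using assms(3) by (rule integral_measurable_subprob_algebra)
  from measurable_comp[OF markov_sub[OF assms(1,2)] this]
  show ?thesis unfolding trans_op_def comp_def by simp
qed

lemma abs_mult_le_sq: "\<bar>x*y\<bar> \<le> x\<^sup>2 + (y::real)\<^sup>2"
proof -
  have "0 \<le> (\<bar>x\<bar> - \<bar>y\<bar>)\<^sup>2" by simp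
  then have a: "\<bar>x\<bar>*\<bar>y\<bar>*2 \<le> x*x + y*y" by (simp add: power2_eq_square algebra_simps)
  have "0 \<le> \<bar>x\<bar>*\<bar>y\<bar>" by simp
  with a show ?thesis unfolding abs_mult power2_eq_square by linarith
qed

lemma sq_diff_le: "(u - v)\<^sup>2 \<le> 2*u\<^sup>2 + 2*(v::real)\<^sup>2"
proof -
  have "0 \<le> (u + v)\<^sup>2" by simp
  then show ?thesis by (simp add: power2_eq_square algebra_simps)
qed

lemma sq_prod_integrable:
  fixes f g :: "'a \<Rightarrow> real"
  assumes "f \<in> borel_measurable M" "g \<in> borel_measurable M"
    "integrable M (\<lambda>x. (f x)\<^sup>2)" "integrable M (\<lambda>x. (g x)\<^sup>2)"
  shows "integrable M (\<lambda>x. f x * g x)"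
proof (rule Bochner_Integration.integrable_bound[where f="\<lambda>x. (f x)\<^sup>2 + (g x)\<^sup>2"])
  show "integrable M (\<lambda>x. (f x)\<^sup>2 + (g x)\<^sup>2)" using assms by auto
  show "(\<lambda>x. f x * g x) \<in> borel_measurable M" using assms by auto
  show "AE x in M. norm (f x * g x) \<le> norm ((f x)\<^sup>2 + (g x)\<^sup>2)"
    using abs_mult_le_sq by auto
qed

lemma quad_disc:
  fixes A B C :: real
  assumes "\<And>l. 0 \<le> A - 2*l*B + l\<^sup>2*C" "C \<ge> 0"
  shows "B\<^sup>2 \<le> A*C"
proof (cases "C = 0")
  case True
  have "B = 0"
  proof (rule ccontr)
    assume "B \<noteq> 0"
    from assms(1)[of "(A+1)/(2*B)"] True \<open>B\<noteq>0\<close> show False by (simp add: field_simps)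
  qed
  then show ?thesis using assms(1)[of 0] True by simp
next
  case False
  then have C: "C > 0" using assms(2) by simp
  from assms(1)[of "B/C"] have "0 \<le> A - B\<^sup>2/C" using C by (simp add: field_simps power2_eq_square)
  then show ?thesis using C by (simp add: field_simps)
qed

lemma cauchy_schwarz_int:
  fixes f g :: "'a \<Rightarrow> real"
  assumes fm: "f \<in> borel_measurable M" and gm: "g \<in> borel_measurable M"
    and fi: "integrable M (\<lambda>x. (f x)\<^sup>2)" and gi: "integrable M (\<lambda>x. (g x)\<^sup>2)"
  shows "(\<integral>x. f x * g x \<partial>M)\<^sup>2 \<le> (\<integral>x. (f x)\<^sup>2 \<partial>M) * (\<integral>x. (g x)\<^sup>2 \<partial>M)"
proof (rule quad_disc)
  show "0 \<le> (\<integral>x. (g x)\<^sup>2 \<partial>M)" by simp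
  fix l :: real
  have fgi: "integrable M (\<lambda>x. f x * g x)" by (rule sq_prod_integrable[OF assms])
  have eq: "(\<lambda>x. (f x - l * g x)\<^sup>2) = (\<lambda>x. (f x)\<^sup>2 - (2*l) * (f x * g x) + l\<^sup>2 * (g x)\<^sup>2)"
    by (auto simp: power2_eq_square algebra_simps)
  have "0 \<le> (\<integral>x. (f x - l * g x)\<^sup>2 \<partial>M)" by simp
  also have "\<dots> = (\<integral>x. (f x)\<^sup>2 \<partial>M) - 2 * l * (\<integral>x. f x * g x \<partial>M) + l\<^sup>2 * (\<integral>x. (g x)\<^sup>2 \<partial>M)"
    unfolding eq using fi gi fgi by simp
  finally show "0 \<le> (\<integral>x. (f x)\<^sup>2 \<partial>M) - 2 * l * (\<integral>x. f x * g x \<partial>M) + l\<^sup>2 * (\<integral>x. (g x)\<^sup>2 \<partial>M)" .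
qed

lemma jensen_enn:
  fixes f :: "'a \<Rightarrow> real"
  assumes "prob_space N" "f \<in> borel_measurable N"
  shows "ennreal ((\<integral>y. f y \<partial>N)\<^sup>2) \<le> (\<integral>\<^sup>+y. ennreal ((f y)\<^sup>2) \<partial>N)"
proof (cases "integrable N (\<lambda>y. (f y)\<^sup>2)")
  case True
  interpret prob_space N by fact
  have "(\<integral>y. f y * 1 \<partial>N)\<^sup>2 \<le> (\<integral>y. (f y)\<^sup>2 \<partial>N) * (\<integral>y. 1\<^sup>2 \<partial>N)"
    by (rule cauchy_schwarz_int) (use assms True in auto)
  then have "(\<integral>y. f y \<partial>N)\<^sup>2 \<le> (\<integral>y. (f y)\<^sup>2 \<partial>N)" by (simp add: prob_space)
  moreover have "(\<integral>\<^sup>+y. ennreal ((f y)\<^sup>2) \<partial>N) = ennreal (\<integral>y. (f y)\<^sup>2 \<partial>N)"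
    by (rule nn_integral_eq_integral) (use True in auto)
  ultimately show ?thesis by simp
next
  case False
  then have "(\<integral>\<^sup>+y. ennreal ((f y)\<^sup>2) \<partial>N) = \<infinity>"
    using assms(2) by (auto simp: integrable_iff_bounded less_top[symmetric])
  then show ?thesis by simp
qed


lemma nn_double:
  assumes mk: "markov_semigroup M K" and st: "stationary_distribution M K" and t: "t \<ge> 0"
    and fm: "f \<in> borel_measurable M"
  shows "(\<integral>\<^sup>+x. (\<integral>\<^sup>+y. ennreal ((f y)\<^sup>2) \<partial>K t x) \<partial>M) = (\<integral>\<^sup>+y. ennreal ((f y)\<^sup>2) \<partial>M)"
proof -
  have "(\<integral>\<^sup>+x. (\<integral>\<^sup>+y. ennreal ((f y)\<^sup>2) \<partial>K t x) \<partial>M) = (\<integral>\<^sup>+y. ennreal ((f y)\<^sup>2) \<partial>(M \<bind> K t))"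
    by (rule nn_integral_bind[symmetric]) (use fm markov_sub[OF mk t] in auto)
  also have "M \<bind> K t = M" using st t unfolding stationary_distribution_def by auto
  finally show ?thesis .
qed

lemma meas_K:
  assumes mk: "markov_semigroup M K" and t: "t \<ge> 0" and x: "x \<in> space M"
    and fm: "f \<in> borel_measurable M"
  shows "f \<in> borel_measurable (K t x)"
  using fm measurable_cong_sets[of "K t x" M borel borel] markov_kernel(2)[OF mk t x] by simp

lemma trans_op_sq_int:
  assumes mk: "markov_semigroup M K" and st: "stationary_distribution M K" and t: "t \<ge> 0"
    and f: "sq_int M f"
  shows "sq_int M (trans_op K t f)" "(\<integral>x. (trans_op K t f x)\<^sup>2 \<partial>M) \<le> (\<integral>x. (f x)\<^sup>2 \<partial>M)"
proof -
  have fm: "f \<in> borel_measurable M" and fi: "integrable M (\<lambda>x. (f x)\<^sup>2)"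
    using f by (auto simp: sq_int_def)
  have Pm: "trans_op K t f \<in> borel_measurable M" by (rule trans_op_meas[OF mk t fm])
  have "(\<integral>\<^sup>+x. ennreal ((trans_op K t f x)\<^sup>2) \<partial>M) \<le> (\<integral>\<^sup>+x. (\<integral>\<^sup>+y. ennreal ((f y)\<^sup>2) \<partial>K t x) \<partial>M)"
  proof (rule nn_integral_mono)
    fix x assume x: "x \<in> space M"
    show "ennreal ((trans_op K t f x)\<^sup>2) \<le> (\<integral>\<^sup>+y. ennreal ((f y)\<^sup>2) \<partial>K t x)"
      unfolding trans_op_def
      by (rule jensen_enn[OF markov_kernel(1)[OF mk t x] meas_K[OF mk t x fm]])
  qed
  also have "\<dots> = (\<integral>\<^sup>+y. ennreal ((f y)\<^sup>2) \<partial>M)" by (rule nn_double[OF mk st t fm])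
  also have "\<dots> = ennreal (\<integral>y. (f y)\<^sup>2 \<partial>M)"
    by (rule nn_integral_eq_integral) (use fi in auto)
  finally have le: "(\<integral>\<^sup>+x. ennreal ((trans_op K t f x)\<^sup>2) \<partial>M) \<le> ennreal (\<integral>y. (f y)\<^sup>2 \<partial>M)" .
  then have Pi: "integrable M (\<lambda>x. (trans_op K t f x)\<^sup>2)"
    using Pm by (auto simp: integrable_iff_bounded intro: le_less_trans)
  then show "sq_int M (trans_op K t f)" using Pm by (simp add: sq_int_def)
  have "(\<integral>\<^sup>+x. ennreal ((trans_op K t f x)\<^sup>2) \<partial>M) = ennreal (\<integral>x. (trans_op K t f x)\<^sup>2 \<partial>M)"
    by (rule nn_integral_eq_integral) (use Pi in auto)
  with le show "(\<integral>x. (trans_op K t f x)\<^sup>2 \<partial>M) \<le> (\<integral>x. (f x)\<^sup>2 \<partial>M)"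
    by (simp add: ennreal_le_iff)
qed

lemma trans_op_AE_integrable:
  assumes mk: "markov_semigroup M K" and st: "stationary_distribution M K" and t: "t \<ge> 0"
    and f: "sq_int M f"
  shows "AE x in M. integrable (K t x) f"
proof -
  have fm: "f \<in> borel_measurable M" and fi: "integrable M (\<lambda>x. (f x)\<^sup>2)"
    using f by (auto simp: sq_int_def)
  have "(\<lambda>N. \<integral>\<^sup>+y. ennreal ((f y)\<^sup>2) \<partial>N) \<in> borel_measurable (subprob_algebra M)"
    using fm by (intro nn_integral_measurable_subprob_algebra) auto
  from measurable_comp[OF markov_sub[OF mk t] this]
  have m: "(\<lambda>x. \<integral>\<^sup>+y. ennreal ((f y)\<^sup>2) \<partial>K t x) \<in> borel_measurable M" by (simp add: comp_def)
  have "(\<integral>\<^sup>+x. (\<integral>\<^sup>+y. ennreal ((f y)\<^sup>2) \<partial>K t x) \<partial>M) = ennreal (\<integral>y. (f y)\<^sup>2 \<partial>M)"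
    unfolding nn_double[OF mk st t fm] by (rule nn_integral_eq_integral) (use fi in auto)
  then have "AE x in M. (\<integral>\<^sup>+y. ennreal ((f y)\<^sup>2) \<partial>K t x) \<noteq> \<infinity>"
    by (intro nn_integral_PInf_AE m) simp
  moreover have "AE x in M. x \<in> space M" by simp
  ultimately show ?thesis
  proof eventually_elim
    case (elim x)
    interpret prob_space "K t x" by (rule markov_kernel(1)[OF mk t elim(2)])
    have fK: "f \<in> borel_measurable (K t x)" by (rule meas_K[OF mk t elim(2) fm])
    have "integrable (K t x) (\<lambda>y. (f y)\<^sup>2)"
      using elim(1) fK by (auto simp: integrable_iff_bounded less_top)
    then show ?case by (rule square_integrable_imp_integrable[OF fK])
  qed
qed

lemma sq_int_lin:
  assumes f: "sq_int M f" and g: "sq_int M g"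
  shows "sq_int M (\<lambda>x. a * f x + b * g x)"
proof -
  have fm: "f \<in> borel_measurable M" and fi: "integrable M (\<lambda>x. (f x)\<^sup>2)"
    and gm: "g \<in> borel_measurable M" and gi: "integrable M (\<lambda>x. (g x)\<^sup>2)"
    using f g by (auto simp: sq_int_def)
  have fgi: "integrable M (\<lambda>x. f x * g x)" by (rule sq_prod_integrable[OF fm gm fi gi])
  have eq: "(\<lambda>x. (a * f x + b * g x)\<^sup>2) = (\<lambda>x. a\<^sup>2 * (f x)\<^sup>2 + (2*a*b) * (f x * g x) + b\<^sup>2 * (g x)\<^sup>2)"
    by (auto simp: power2_eq_square algebra_simps)
  show ?thesis unfolding sq_int_def eq using fm gm fi gi fgi by auto
qed

lemma sq_int_lin3:
  assumes "sq_int M f1" "sq_int M f2" "sq_int M f3"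
  shows "sq_int M (\<lambda>x. a * f1 x + b * f2 x + c * f3 x)"
  using sq_int_lin[OF sq_int_lin[OF assms(1,2), of a b] assms(3), of 1 c] by simp


lemma D_sq_int:
  assumes mk: "markov_semigroup M K" and st: "stationary_distribution M K" and t: "t > 0"
    and f: "sq_int M f" and g: "sq_int M g"
  shows "sq_int M (\<lambda>x. (trans_op K t f x - f x) / t - g x)"
proof -
  have P: "sq_int M (trans_op K t f)" using trans_op_sq_int(1)[OF mk st _ f] t by simp
  have eq: "(\<lambda>x. (trans_op K t f x - f x) / t - g x) = (\<lambda>x. (1/t) * trans_op K t f x + (-1/t) * f x + (-1) * g x)"
    using t by (auto simp: field_simps)
  show ?thesis unfolding eq by (rule sq_int_lin3[OF P f g])
qed

lemma sq_sum_le: "(p + q)\<^sup>2 \<le> 2*p\<^sup>2 + 2*(q::real)\<^sup>2"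
  using sq_diff_le[of p "-q"] by simp

lemma gen_unique:
  assumes mk: "markov_semigroup M K" and st: "stationary_distribution M K"
    and h1: "has_generator_value M K f g1" and h2: "has_generator_value M K f g2"
  shows "AE x in M. g1 x = g2 x"
proof -
  define U1 where "U1 t = (\<integral>x. ((trans_op K t f x - f x) / t - g1 x)\<^sup>2 \<partial>M)" for t
  define U2 where "U2 t = (\<integral>x. ((trans_op K t f x - f x) / t - g2 x)\<^sup>2 \<partial>M)" for t
  have l1: "(U1 \<longlongrightarrow> 0) (at_right 0)" using h1 unfolding has_generator_value_def U1_def[abs_def] by simp
  have l2: "(U2 \<longlongrightarrow> 0) (at_right 0)" using h2 unfolding has_generator_value_def U2_def[abs_def] by simp
  have f: "sq_int M f" and g1: "sq_int M g1" and g2: "sq_int M g2"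
    using h1 h2 by (auto simp: has_generator_value_def)
  have gm: "(\<lambda>x. g1 x - g2 x) \<in> borel_measurable M" using g1 g2 by (auto simp: sq_int_def)
  have gi: "integrable M (\<lambda>x. (g1 x - g2 x)\<^sup>2)"
    using sq_int_lin[OF g1 g2, of 1 "-1"] by (simp add: sq_int_def)
  have bound: "(\<integral>x. (g1 x - g2 x)\<^sup>2 \<partial>M) \<le> 2 * U1 t + 2 * U2 t" if t: "t > 0" for t
  proof -
    have i1: "integrable M (\<lambda>x. ((trans_op K t f x - f x) / t - g1 x)\<^sup>2)"
      using D_sq_int[OF mk st t f g1] by (simp add: sq_int_def)
    have i2: "integrable M (\<lambda>x. ((trans_op K t f x - f x) / t - g2 x)\<^sup>2)"
      using D_sq_int[OF mk st t f g2] by (simp add: sq_int_def)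
    have "(\<integral>x. (g1 x - g2 x)\<^sup>2 \<partial>M) \<le> (\<integral>x. 2*((trans_op K t f x - f x) / t - g1 x)\<^sup>2 + 2*((trans_op K t f x - f x) / t - g2 x)\<^sup>2 \<partial>M)"
    proof (rule integral_mono')
      show "integrable M (\<lambda>x. 2*((trans_op K t f x - f x) / t - g1 x)\<^sup>2 + 2*((trans_op K t f x - f x) / t - g2 x)\<^sup>2)"
        using i1 i2 by auto
      fix x
      show "(g1 x - g2 x)\<^sup>2 \<le> 2*((trans_op K t f x - f x) / t - g1 x)\<^sup>2 + 2*((trans_op K t f x - f x) / t - g2 x)\<^sup>2"
        using sq_diff_le[of "(trans_op K t f x - f x) / t - g2 x" "(trans_op K t f x - f x) / t - g1 x"]
        by (simp add: add.commute)
      show "0 \<le> 2*((trans_op K t f x - f x) / t - g1 x)\<^sup>2 + 2*((trans_op K t f x - f x) / t - g2 x)\<^sup>2"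
        by simp
    qed
    also have "\<dots> = 2 * U1 t + 2 * U2 t" using i1 i2 by (simp add: U1_def U2_def)
    finally show ?thesis .
  qed
  have "((\<lambda>t. 2 * U1 t + 2 * U2 t) \<longlongrightarrow> 2 * 0 + 2 * 0) (at_right 0)"
    by (intro tendsto_intros l1 l2)
  then have lim: "((\<lambda>t. 2 * U1 t + 2 * U2 t) \<longlongrightarrow> 0) (at_right (0::real))" by simp
  have "(\<integral>x. (g1 x - g2 x)\<^sup>2 \<partial>M) \<le> 0"
  proof (rule tendsto_lowerbound[OF lim])
    show "\<forall>\<^sub>F t in at_right 0. (\<integral>x. (g1 x - g2 x)\<^sup>2 \<partial>M) \<le> 2 * U1 t + 2 * U2 t"
      using eventually_at_right_less[of "0::real"] by eventually_elim (rule bound)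
  qed simp
  moreover have "0 \<le> (\<integral>x. (g1 x - g2 x)\<^sup>2 \<partial>M)" by simp
  ultimately have "(\<integral>x. (g1 x - g2 x)\<^sup>2 \<partial>M) = 0" by simp
  then have "AE x in M. (g1 x - g2 x)\<^sup>2 = 0"
    using integral_nonneg_eq_0_iff_AE[OF gi] by simp
  then show ?thesis by eventually_elim simp
qed

lemma gen_lin:
  assumes mk: "markov_semigroup M K" and st: "stationary_distribution M K"
    and h1: "has_generator_value M K f g1" and h2: "has_generator_value M K h g2"
  shows "has_generator_value M K (\<lambda>x. a * f x + b * h x) (\<lambda>x. a * g1 x + b * g2 x)"
proof -
  define U1 where "U1 t = (\<integral>x. ((trans_op K t f x - f x) / t - g1 x)\<^sup>2 \<partial>M)" for t
  define U2 where "U2 t = (\<integral>x. ((trans_op K t h x - h x) / t - g2 x)\<^sup>2 \<partial>M)" for t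
  define V where "V t = (\<integral>x. ((trans_op K t (\<lambda>x. a * f x + b * h x) x - (a * f x + b * h x)) / t - (a * g1 x + b * g2 x))\<^sup>2 \<partial>M)" for t
  have l1: "(U1 \<longlongrightarrow> 0) (at_right 0)" using h1 unfolding has_generator_value_def U1_def[abs_def] by simp
  have l2: "(U2 \<longlongrightarrow> 0) (at_right 0)" using h2 unfolding has_generator_value_def U2_def[abs_def] by simp
  have f: "sq_int M f" and g1: "sq_int M g1" and h: "sq_int M h" and g2: "sq_int M g2"
    using h1 h2 by (auto simp: has_generator_value_def)
  have bound: "V t \<le> 2 * a\<^sup>2 * U1 t + 2 * b\<^sup>2 * U2 t" if t: "t > 0" for t
  proof -
    have i1: "integrable M (\<lambda>x. ((trans_op K t f x - f x) / t - g1 x)\<^sup>2)"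
      using D_sq_int[OF mk st t f g1] by (simp add: sq_int_def)
    have i2: "integrable M (\<lambda>x. ((trans_op K t h x - h x) / t - g2 x)\<^sup>2)"
      using D_sq_int[OF mk st t h g2] by (simp add: sq_int_def)
    have AEf: "AE x in M. integrable (K t x) f" using trans_op_AE_integrable[OF mk st _ f] t by simp
    have AEh: "AE x in M. integrable (K t x) h" using trans_op_AE_integrable[OF mk st _ h] t by simp
    have "V t \<le> (\<integral>x. 2*a\<^sup>2*((trans_op K t f x - f x) / t - g1 x)\<^sup>2 + 2*b\<^sup>2*((trans_op K t h x - h x) / t - g2 x)\<^sup>2 \<partial>M)"
      unfolding V_def
    proof (rule integral_mono_AE')
      show "integrable M (\<lambda>x. 2*a\<^sup>2*((trans_op K t f x - f x) / t - g1 x)\<^sup>2 + 2*b\<^sup>2*((trans_op K t h x - h x) / t - g2 x)\<^sup>2)"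
        using i1 i2 by auto
      show "AE x in M. 0 \<le> 2*a\<^sup>2*((trans_op K t f x - f x) / t - g1 x)\<^sup>2 + 2*b\<^sup>2*((trans_op K t h x - h x) / t - g2 x)\<^sup>2"
        by simp
      show "AE x in M. ((trans_op K t (\<lambda>x. a * f x + b * h x) x - (a * f x + b * h x)) / t - (a * g1 x + b * g2 x))\<^sup>2
          \<le> 2*a\<^sup>2*((trans_op K t f x - f x) / t - g1 x)\<^sup>2 + 2*b\<^sup>2*((trans_op K t h x - h x) / t - g2 x)\<^sup>2"
        using AEf AEh
      proof eventually_elim
        case (elim x)
        have P: "trans_op K t (\<lambda>x. a * f x + b * h x) x = a * trans_op K t f x + b * trans_op K t h x"
          unfolding trans_op_def using elim by simp
        have eq: "(trans_op K t (\<lambda>x. a * f x + b * h x) x - (a * f x + b * h x)) / t - (a * g1 x + b * g2 x)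
           = a * ((trans_op K t f x - f x) / t - g1 x) + b * ((trans_op K t h x - h x) / t - g2 x)"
          unfolding P using t by (simp add: field_simps)
        show ?case unfolding eq using sq_sum_le[of "a * ((trans_op K t f x - f x) / t - g1 x)" "b * ((trans_op K t h x - h x) / t - g2 x)"]
          by (simp add: power_mult_distrib mult.assoc)
      qed
    qed
    also have "\<dots> = 2 * a\<^sup>2 * U1 t + 2 * b\<^sup>2 * U2 t" using i1 i2 by (simp add: U1_def U2_def)
    finally show ?thesis .
  qed
  have nn: "0 \<le> V t" for t unfolding V_def by simp
  have "((\<lambda>t. 2 * a\<^sup>2 * U1 t + 2 * b\<^sup>2 * U2 t) \<longlongrightarrow> 2 * a\<^sup>2 * 0 + 2 * b\<^sup>2 * 0) (at_right 0)"
    by (intro tendsto_intros l1 l2)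
  then have lim: "((\<lambda>t. 2 * a\<^sup>2 * U1 t + 2 * b\<^sup>2 * U2 t) \<longlongrightarrow> 0) (at_right (0::real))" by simp
  have "(V \<longlongrightarrow> 0) (at_right 0)"
  proof (rule tendsto_sandwich[OF _ _ tendsto_const lim])
    show "\<forall>\<^sub>F t in at_right 0. 0 \<le> V t" using nn by simp
    show "\<forall>\<^sub>F t in at_right 0. V t \<le> 2 * a\<^sup>2 * U1 t + 2 * b\<^sup>2 * U2 t"
      using eventually_at_right_less[of "0::real"] by eventually_elim (rule bound)
  qed
  then show ?thesis unfolding has_generator_value_def V_def
    using sq_int_lin[OF f h] sq_int_lin[OF g1 g2] by simp
qed


lemma ptw_aux:
  fixes p q t :: real
  assumes "t > 0"
  shows "((p - q) / t) * q \<le> (p\<^sup>2 - q\<^sup>2) / (2 * t)"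
proof -
  have "(p\<^sup>2 - q\<^sup>2) / (2 * t) - ((p - q) / t) * q = (p - q)\<^sup>2 / (2 * t)"
    using assms by (simp add: field_simps power2_eq_square)
  moreover have "0 \<le> (p - q)\<^sup>2 / (2 * t)" using assms by simp
  ultimately show ?thesis by linarith
qed

lemma gen_nonpos:
  assumes mk: "markov_semigroup M K" and st: "stationary_distribution M K"
    and hg: "has_generator_value M K f g"
  shows "(\<integral>x. g x * f x \<partial>M) \<le> 0"
proof -
  define U where "U = (\<lambda>t. \<integral>x. ((trans_op K t f x - f x) / t - g x)\<^sup>2 \<partial>M)"
  define w where "w = (\<lambda>t. \<integral>x. ((trans_op K t f x - f x) / t - g x) * f x \<partial>M)"
  define F where "F = (\<integral>x. (f x)\<^sup>2 \<partial>M)"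
  have lU: "(U \<longlongrightarrow> 0) (at_right 0)" using hg unfolding has_generator_value_def U_def by simp
  have f: "sq_int M f" and g: "sq_int M g" using hg by (auto simp: has_generator_value_def)
  have fm: "f \<in> borel_measurable M" and fi: "integrable M (\<lambda>x. (f x)\<^sup>2)"
    and gm: "g \<in> borel_measurable M" and gi: "integrable M (\<lambda>x. (g x)\<^sup>2)"
    using f g by (auto simp: sq_int_def)
  have gfi: "integrable M (\<lambda>x. g x * f x)" by (rule sq_prod_integrable[OF gm fm gi fi])
  have wb: "(w t)\<^sup>2 \<le> U t * F" if t: "t > 0" for t
  proof -
    have D: "sq_int M (\<lambda>x. (trans_op K t f x - f x) / t - g x)" by (rule D_sq_int[OF mk st t f g])
    show ?thesis unfolding w_def U_def F_def
      by (rule cauchy_schwarz_int) (use D fm fi in \<open>auto simp: sq_int_def\<close>)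
  qed
  have "((\<lambda>t. U t * F) \<longlongrightarrow> 0 * F) (at_right 0)" by (intro tendsto_intros lU)
  then have lim0: "((\<lambda>t. U t * F) \<longlongrightarrow> 0) (at_right (0::real))" by simp
  have "((\<lambda>t. (w t)\<^sup>2) \<longlongrightarrow> 0) (at_right (0::real))"
  proof (rule tendsto_sandwich[OF _ _ tendsto_const lim0])
    show "\<forall>\<^sub>F t in at_right 0. 0 \<le> (w t)\<^sup>2" by simp
    show "\<forall>\<^sub>F t in at_right 0. (w t)\<^sup>2 \<le> U t * F"
      using eventually_at_right_less[of "0::real"] by eventually_elim (rule wb)
  qed
  then have "((\<lambda>t. sqrt ((w t)\<^sup>2)) \<longlongrightarrow> sqrt 0) (at_right (0::real))" by (rule tendsto_real_sqrt)
  then have "((\<lambda>t. \<bar>w t\<bar>) \<longlongrightarrow> 0) (at_right (0::real))" by simp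
  then have lw: "(w \<longlongrightarrow> 0) (at_right (0::real))" by (simp add: tendsto_rabs_zero_iff)
  have "((\<lambda>t. (\<integral>x. g x * f x \<partial>M) + w t) \<longlongrightarrow> (\<integral>x. g x * f x \<partial>M) + 0) (at_right (0::real))"
    by (intro tendsto_intros lw)
  then have lim: "((\<lambda>t. (\<integral>x. g x * f x \<partial>M) + w t) \<longlongrightarrow> (\<integral>x. g x * f x \<partial>M)) (at_right (0::real))"
    by simp
  have ev: "(\<integral>x. g x * f x \<partial>M) + w t \<le> 0" if t: "t > 0" for t
  proof -
    have D: "sq_int M (\<lambda>x. (trans_op K t f x - f x) / t - g x)" by (rule D_sq_int[OF mk st t f g])
    have P: "sq_int M (trans_op K t f)" using trans_op_sq_int(1)[OF mk st _ f] t by simp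
    have Pb: "(\<integral>x. (trans_op K t f x)\<^sup>2 \<partial>M) \<le> (\<integral>x. (f x)\<^sup>2 \<partial>M)"
      using trans_op_sq_int(2)[OF mk st _ f] t by simp
    have Pi: "integrable M (\<lambda>x. (trans_op K t f x)\<^sup>2)" using P by (simp add: sq_int_def)
    have Di: "integrable M (\<lambda>x. ((trans_op K t f x - f x) / t - g x) * f x)"
      using D f by (intro sq_prod_integrable) (auto simp: sq_int_def)
    have Dfi: "integrable M (\<lambda>x. ((trans_op K t f x - f x) / t) * f x)"
    proof -
      have "(\<lambda>x. ((trans_op K t f x - f x) / t) * f x) = (\<lambda>x. ((trans_op K t f x - f x) / t - g x) * f x + g x * f x)"
        by (auto simp: algebra_simps)
      then show ?thesis using Di gfi by simp
    qed
    have "(\<integral>x. g x * f x \<partial>M) + w t = (\<integral>x. ((trans_op K t f x - f x) / t) * f x \<partial>M)"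
    proof -
      have "(\<lambda>x. ((trans_op K t f x - f x) / t) * f x) = (\<lambda>x. ((trans_op K t f x - f x) / t - g x) * f x + g x * f x)"
        by (auto simp: algebra_simps)
      then show ?thesis unfolding w_def using Di gfi by simp
    qed
    also have "\<dots> \<le> (\<integral>x. ((trans_op K t f x)\<^sup>2 - (f x)\<^sup>2) / (2 * t) \<partial>M)"
      by (rule integral_mono[OF Dfi]) (use Pi fi t ptw_aux in auto)
    also have "\<dots> = ((\<integral>x. (trans_op K t f x)\<^sup>2 \<partial>M) - (\<integral>x. (f x)\<^sup>2 \<partial>M)) / (2 * t)"
      using Pi fi by simp
    also have "\<dots> \<le> 0" using Pb t by (simp add: divide_nonpos_pos)
    finally show ?thesis .
  qed
  show ?thesis
  proof (rule tendsto_upperbound[OF lim])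
    show "\<forall>\<^sub>F t in at_right 0. (\<integral>x. g x * f x \<partial>M) + w t \<le> 0"
      using eventually_at_right_less[of "0::real"] by eventually_elim (rule ev)
  qed simp
qed


lemma gen_hgv:
  assumes "f \<in> gen_domain M K"
  shows "has_generator_value M K f (generator M K f)"
proof -
  from assms obtain g where "has_generator_value M K f g" by (auto simp: gen_domain_def)
  then show ?thesis unfolding generator_def by (rule someI[of "has_generator_value M K f" g])
qed

lemma dom_sq: "f \<in> gen_domain M K \<Longrightarrow> sq_int M f"
  using gen_hgv[of f M K] by (simp add: has_generator_value_def)

lemma gen_sq: "f \<in> gen_domain M K \<Longrightarrow> sq_int M (generator M K f)"
  using gen_hgv[of f M K] by (simp add: has_generator_value_def)

lemma dform_nonneg:
  assumes mk: "markov_semigroup M K" and st: "stationary_distribution M K" and f: "f \<in> gen_domain M K"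
  shows "0 \<le> dform M K f f"
  using gen_nonpos[OF mk st gen_hgv[OF f]] by (simp add: dform_def)

lemma dom_lin:
  assumes mk: "markov_semigroup M K" and st: "stationary_distribution M K"
    and f: "f \<in> gen_domain M K" and h: "h \<in> gen_domain M K"
  shows "(\<lambda>x. a * f x + b * h x) \<in> gen_domain M K"
  using gen_lin[OF mk st gen_hgv[OF f] gen_hgv[OF h], of a b] unfolding gen_domain_def by blast

lemma dform_lin2:
  assumes f: "f \<in> gen_domain M K" and k1: "sq_int M k1" and k2: "sq_int M k2"
  shows "dform M K f (\<lambda>x. a * k1 x + b * k2 x) = a * dform M K f k1 + b * dform M K f k2"
proof -
  have L: "sq_int M (generator M K f)" by (rule gen_sq[OF f])
  have i1: "integrable M (\<lambda>x. generator M K f x * k1 x)"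
    using L k1 by (intro sq_prod_integrable) (auto simp: sq_int_def)
  have i2: "integrable M (\<lambda>x. generator M K f x * k2 x)"
    using L k2 by (intro sq_prod_integrable) (auto simp: sq_int_def)
  have eq: "(\<lambda>x. generator M K f x * (a * k1 x + b * k2 x)) = (\<lambda>x. a * (generator M K f x * k1 x) + b * (generator M K f x * k2 x))"
    by (auto simp: algebra_simps)
  show ?thesis unfolding dform_def eq using i1 i2 by simp
qed

lemma dform_lin1:
  assumes mk: "markov_semigroup M K" and st: "stationary_distribution M K"
    and f1: "f1 \<in> gen_domain M K" and f2: "f2 \<in> gen_domain M K" and k: "sq_int M k"
  shows "dform M K (\<lambda>x. a * f1 x + b * f2 x) k = a * dform M K f1 k + b * dform M K f2 k"
proof -
  define h where "h = (\<lambda>x. a * f1 x + b * f2 x)"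
  have hD: "h \<in> gen_domain M K" unfolding h_def by (rule dom_lin[OF mk st f1 f2])
  have AE: "AE x in M. generator M K h x = a * generator M K f1 x + b * generator M K f2 x"
    by (rule gen_unique[OF mk st gen_hgv[OF hD]])
       (unfold h_def, rule gen_lin[OF mk st gen_hgv[OF f1] gen_hgv[OF f2]])
  have L: "sq_int M (generator M K h)" by (rule gen_sq[OF hD])
  have L1: "sq_int M (generator M K f1)" by (rule gen_sq[OF f1])
  have L2: "sq_int M (generator M K f2)" by (rule gen_sq[OF f2])
  have i1: "integrable M (\<lambda>x. generator M K f1 x * k x)"
    using L1 k by (intro sq_prod_integrable) (auto simp: sq_int_def)
  have i2: "integrable M (\<lambda>x. generator M K f2 x * k x)"
    using L2 k by (intro sq_prod_integrable) (auto simp: sq_int_def)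
  have "(\<integral>x. generator M K h x * k x \<partial>M) = (\<integral>x. (a * generator M K f1 x + b * generator M K f2 x) * k x \<partial>M)"
    by (rule integral_cong_AE) (use L L1 L2 k AE in \<open>auto simp: sq_int_def\<close>)
  also have "\<dots> = (\<integral>x. a * (generator M K f1 x * k x) + b * (generator M K f2 x * k x) \<partial>M)"
    by (simp add: algebra_simps)
  also have "\<dots> = a * (\<integral>x. generator M K f1 x * k x \<partial>M) + b * (\<integral>x. generator M K f2 x * k x \<partial>M)"
    using i1 i2 by simp
  finally show ?thesis unfolding dform_def h_def[symmetric] by simp
qed

lemma key_arith:
  fixes a b sv c C :: real
  assumes a: "a > 0" and c: "c > 0"
    and sec: "\<And>gg dd. gg*a + dd*(sv+c) \<le> C * sqrt a * sqrt (gg\<^sup>2*a + 2*gg*dd* sv + dd\<^sup>2*b)"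
  shows "a*b - sv\<^sup>2 \<noteq> 0" "a*b - sv\<^sup>2 > 0 \<Longrightarrow> sqrt (1 + c\<^sup>2/(a*b - sv\<^sup>2)) \<le> C"
proof -
  define D where "D = a*b - sv\<^sup>2"
  have "1*a + 0*(sv+c) \<le> C * sqrt a * sqrt (1\<^sup>2*a + 2*1*0* sv + 0\<^sup>2*b)" by (rule sec)
  then have "a \<le> C * a" using a by (simp add: mult.assoc)
  then have C1: "1 \<le> C" using a by simp
  define g0 where "g0 = D - sv*c"
  define d0 where "d0 = a*c"
  have Qeq: "g0\<^sup>2*a + 2*g0*d0* sv + d0\<^sup>2*b = a*D*(D+c\<^sup>2)"
    unfolding g0_def d0_def D_def by (simp add: power2_eq_square algebra_simps)
  have Eeq: "g0*a + d0*(sv+c) = a*(D+c\<^sup>2)"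
    unfolding g0_def d0_def by (simp add: power2_eq_square algebra_simps)
  have main: "a*(D+c\<^sup>2) \<le> C * sqrt a * sqrt (a*D*(D+c\<^sup>2))"
    using sec[of g0 d0] unfolding Qeq Eeq .
  show "a*b - sv\<^sup>2 \<noteq> 0"
  proof
    assume "a*b - sv\<^sup>2 = 0"
    then have "D = 0" by (simp add: D_def)
    with main have "a*c\<^sup>2 \<le> 0" by simp
    moreover have "a*c\<^sup>2 > 0" using a c by simp
    ultimately show False by simp
  qed
  assume "a*b - sv\<^sup>2 > 0"
  then have D: "D > 0" by (simp add: D_def)
  have pos: "0 \<le> a*(D+c\<^sup>2)" using a D by simp
  have "(a*(D+c\<^sup>2))\<^sup>2 \<le> (C * sqrt a * sqrt (a*D*(D+c\<^sup>2)))\<^sup>2"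
    by (rule power_mono[OF main pos])
  also have "\<dots> = C\<^sup>2 * a * (a*D*(D+c\<^sup>2))"
    using a D by (simp add: power_mult_distrib)
  finally have "(a*(D+c\<^sup>2)) * (a*(D+c\<^sup>2)) \<le> (a*(D+c\<^sup>2)) * (C\<^sup>2 * a * D)"
    by (simp add: power2_eq_square algebra_simps)
  then have "a*(D+c\<^sup>2) \<le> C\<^sup>2 * a * D"
    using a D by (simp add: mult_le_cancel_left_pos add_pos_nonneg)
  then have "D + c\<^sup>2 \<le> C\<^sup>2 * D" using a by (simp add: mult.assoc mult.left_commute[of a])
  then have "1 + c\<^sup>2/D \<le> C\<^sup>2" using D by (simp add: field_simps)
  then have "sqrt (1 + c\<^sup>2/D) \<le> sqrt (C\<^sup>2)" by (rule real_sqrt_le_mono)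
  then show "sqrt (1 + c\<^sup>2/(a*b - sv\<^sup>2)) \<le> C" using C1 by (simp add: D_def)
qed


theorem proposition3p7:
  fixes \<nu> :: "'a measure" and K :: "real \<Rightarrow> 'a \<Rightarrow> 'a measure" and f g :: "'a \<Rightarrow> real"
  assumes "markov_semigroup \<nu> K"
    and "stationary_distribution \<nu> K"
    and "f \<in> gen_domain \<nu> K" and "g \<in> gen_domain \<nu> K"
    and "dform \<nu> K f f * dform \<nu> K g g > 0"
    and "(dform \<nu> K f g - dform \<nu> K g f) / 2 > 0"
  shows "let Ech = (dform \<nu> K f g - dform \<nu> K g f) / 2;
             Etl = (dform \<nu> K f g + dform \<nu> K g f) / 2;
             \<Delta> = dform \<nu> K f f * dform \<nu> K g g - Etl\<^sup>2
         in \<Delta> \<ge> 0 \<and>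
            (dform \<nu> K f f * dform \<nu> K g g \<noteq> dform \<nu> K f g * Etl \<and> \<Delta> > 0 \<longrightarrow>
               (sect \<nu> K)\<^sup>2 - 1 \<ge> ereal (Ech\<^sup>2 / \<Delta>)) \<and>
            (dform \<nu> K f f * dform \<nu> K g g \<noteq> dform \<nu> K f g * Etl \<and> \<Delta> = 0 \<longrightarrow>
               (sect \<nu> K)\<^sup>2 - 1 \<ge> \<infinity>) \<and>
            (dform \<nu> K f f * dform \<nu> K g g = dform \<nu> K f g * Etl \<longrightarrow>
               (sect \<nu> K)\<^sup>2 - 1 \<ge> ereal (Ech / Etl))"
proof -
  note mk = assms(1) and st = assms(2) and fD = assms(3) and gD = assms(4)
  define a where "a = dform \<nu> K f f"
  define b where "b = dform \<nu> K g g"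
  define p where "p = dform \<nu> K f g"
  define q where "q = dform \<nu> K g f"
  define sv where "sv = (p + q) / 2"
  define cv where "cv = (p - q) / 2"
  have fs: "sq_int \<nu> f" by (rule dom_sq[OF fD])
  have gs: "sq_int \<nu> g" by (rule dom_sq[OF gD])
  define k where "k = (\<lambda>u v. (\<lambda>x. u * f x + v * g x))"
  have kD: "k u v \<in> gen_domain \<nu> K" for u v unfolding k_def by (rule dom_lin[OF mk st fD gD])
  have ks: "sq_int \<nu> (k u v)" for u v using kD dom_sq by blast
  have Efk: "dform \<nu> K f (k u v) = u * a + v * p" for u v
    unfolding k_def a_def p_def by (rule dform_lin2[OF fD fs gs])
  have Egk: "dform \<nu> K g (k u v) = u * q + v * b" for u v
    unfolding k_def q_def b_def by (rule dform_lin2[OF gD fs gs])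
  have Ekk: "dform \<nu> K (k u v) (k u v) = u\<^sup>2 * a + 2 * u * v * sv + v\<^sup>2 * b" for u v
  proof -
    have "dform \<nu> K (k u v) (k u v) = u * dform \<nu> K f (k u v) + v * dform \<nu> K g (k u v)"
      using dform_lin1[OF mk st fD gD ks[of u v], of u v] by (simp only: k_def)
    then show ?thesis unfolding Efk Egk sv_def by (simp add: power2_eq_square algebra_simps)
  qed
  have a0: "0 \<le> a" unfolding a_def by (rule dform_nonneg[OF mk st fD])
  have b0: "0 \<le> b" unfolding b_def by (rule dform_nonneg[OF mk st gD])
  have ab: "a * b > 0" using assms(5) by (simp add: a_def b_def)
  have apos: "a > 0" using a0 ab by (cases "a = 0") auto
  have bpos: "b > 0" using b0 ab by (cases "b = 0") auto
  have cpos: "cv > 0" using assms(6) by (simp add: cv_def p_def q_def)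
  have pe: "p = sv + cv" by (simp add: sv_def cv_def field_simps)
  have "0 \<le> dform \<nu> K (k (-sv) a) (k (-sv) a)" by (rule dform_nonneg[OF mk st kD])
  also have "\<dots> = a * (a * b - sv\<^sup>2)" unfolding Ekk by (simp add: power2_eq_square algebra_simps)
  finally have Dge: "0 \<le> a * b - sv\<^sup>2" using apos by (simp add: zero_le_mult_iff)
  have keyC: "a * b - sv\<^sup>2 \<noteq> 0 \<and> (a * b - sv\<^sup>2 > 0 \<longrightarrow> sqrt (1 + cv\<^sup>2/(a * b - sv\<^sup>2)) \<le> C)"
    if P: "\<forall>f'\<in>gen_domain \<nu> K. \<forall>g'\<in>gen_domain \<nu> K.
       dform \<nu> K f' g' \<le> C * sqrt (dform \<nu> K f' f') * sqrt (dform \<nu> K g' g')" for C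
  proof -
    have sec: "u * a + v * (sv+cv) \<le> C * sqrt a * sqrt (u\<^sup>2 * a + 2 * u * v * sv + v\<^sup>2 * b)" for u v
    proof -
      have "dform \<nu> K f (k u v) \<le> C * sqrt (dform \<nu> K f f) * sqrt (dform \<nu> K (k u v) (k u v))"
        using P fD kD[of u v] by blast
      then show ?thesis unfolding Efk Ekk a_def[symmetric] pe .
    qed
    show ?thesis using key_arith[OF apos cpos sec] by blast
  qed
  have G1: "(sect \<nu> K)\<^sup>2 - 1 \<ge> ereal (cv\<^sup>2 / (a * b - sv\<^sup>2))" if Dpos: "a * b - sv\<^sup>2 > 0"
  proof -
    define m where "m = sqrt (1 + cv\<^sup>2/(a * b - sv\<^sup>2))"
    have m1: "1 \<le> m" unfolding m_def using Dpos by simp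
    have msq: "m\<^sup>2 = 1 + cv\<^sup>2/(a * b - sv\<^sup>2)" unfolding m_def using Dpos by simp
    have "ereal m \<le> sect \<nu> K" unfolding sect_def
      by (rule Inf_greatest) (use keyC Dpos in \<open>auto simp: m_def\<close>)
    then show ?thesis
    proof (cases "sect \<nu> K" rule: ereal_cases)
      case (real r)
      with \<open>ereal m \<le> sect \<nu> K\<close> have "m \<le> r" by simp
      then have "m\<^sup>2 \<le> r\<^sup>2" using m1 by (intro power_mono) auto
      then have "cv\<^sup>2 / (a * b - sv\<^sup>2) \<le> r\<^sup>2 - 1" using msq by simp
      moreover have "ereal (r\<^sup>2) - 1 = ereal (r\<^sup>2 - 1)" by (metis ereal_minus(1) one_ereal_def)
      ultimately show ?thesis using real by simp
    next
      case PInf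
      then show ?thesis by (simp add: power2_eq_square)
    next
      case MInf
      with \<open>ereal m \<le> sect \<nu> K\<close> show ?thesis by simp
    qed
  qed
  have G2: "sect \<nu> K = \<infinity>" if D0: "a * b - sv\<^sup>2 = 0"
  proof -
    have "{ereal C | C. \<forall>f\<in>gen_domain \<nu> K. \<forall>g\<in>gen_domain \<nu> K.
       dform \<nu> K f g \<le> C * sqrt (dform \<nu> K f f) * sqrt (dform \<nu> K g g)} = {}"
      using keyC D0 by blast
    note E = this
    show ?thesis unfolding sect_def E by (simp add: top_ereal_def)
  qed
  show ?thesis
    unfolding Let_def a_def[symmetric] b_def[symmetric] p_def[symmetric] q_def[symmetric]
      sv_def[symmetric] cv_def[symmetric]
  proof (intro conjI impI)
    show "0 \<le> a * b - sv\<^sup>2" by (rule Dge)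
    show "ereal (cv\<^sup>2 / (a * b - sv\<^sup>2)) \<le> (sect \<nu> K)\<^sup>2 - 1"
      if "a * b \<noteq> p * sv \<and> 0 < a * b - sv\<^sup>2" using that G1 by blast
    show "\<infinity> \<le> (sect \<nu> K)\<^sup>2 - 1"
      if "a * b \<noteq> p * sv \<and> a * b - sv\<^sup>2 = 0" using that G2 by (simp add: power2_eq_square)
    show "ereal (cv / sv) \<le> (sect \<nu> K)\<^sup>2 - 1" if E: "a * b = p * sv"
    proof -
      have Deq: "a * b - sv\<^sup>2 = sv * cv" using E pe by (simp add: power2_eq_square algebra_simps)
      have "sv \<noteq> 0" using E ab by auto
      moreover have "sv \<ge> 0" using Dge Deq cpos by (simp add: zero_le_mult_iff)
      ultimately have svp: "sv > 0" by simp
      then have Dp: "a * b - sv\<^sup>2 > 0" using Deq cpos by simp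
      have "cv\<^sup>2 / (a * b - sv\<^sup>2) = cv / sv" unfolding Deq using cpos svp
        by (simp add: power2_eq_square)
      then show ?thesis using G1[OF Dp] by simp
    qed
  qed
qed

end
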